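(* Let $(\mathcal{X},c)$ be a metric space with diameter at most $1$, let $\mu,\nu$ be probability distributions on $\mathcal{X}$, and let $p\ge1$ and $k>0$. Then $$\mathrm{RPW}_{p,k}(\mu,\nu)\le\tfrac1k W_p(\mu,\nu)\le\mathrm{RPW}_{p,k}(\mu,\nu)+k^{-\frac{p+1}{p}}.$$
   Context: $c(x,y)\le 1$ for all $x,y$; distributions are Borel probability measures. For $p\in[1,\infty)$ and $\alpha\in[0,1]$, a partial transport plan of mass $\alpha$ between $\mu,\nu$ is a nonnegative measure $\gamma$ on $\mathcal{X}\times\mathcal{X}$ of total mass $\alpha$ with first marginal $\le\mu$ and second marginal $\le\nu$ (setwise); its cost is $w_p(\gamma)=(\int c^p\,d\gamma)^{1/p}$, and $W_{p,\alpha}(\mu,\nu)$ is the infimum of $w_p(\gamma)$ over such $\gamma$; $W_p=W_{p,1}$ is the $p$-Wasserstein distance. For $k\ge0$, $\mathrm{RPW}_{p,k}(\mu,\nu)=\inf\{\varepsilon\in[0,1]: W_{p,1-\varepsilon}(\mu,\nu)\le k\varepsilon\}$. *)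

theory Defs
  imports "HOL-Probability.Probability"
begin

text \<open>Cost is the metric c = dist. Distributions are Borel measures on the type 'a;
  transport plans are Borel measures on the product metric space 'a \<times> 'a.\<close>

definition partial_plan ::
  "real \<Rightarrow> 'a::metric_space measure \<Rightarrow> 'a measure \<Rightarrow> ('a \<times> 'a) measure \<Rightarrow> bool" where
  "partial_plan \<alpha> \<mu> \<nu> \<gamma> \<longleftrightarrow>
     sets \<gamma> = sets (borel :: ('a \<times> 'a) measure) \<and>
     emeasure \<gamma> (space \<gamma>) = ennreal \<alpha> \<and>
     (\<forall>A \<in> sets (borel :: 'a measure). emeasure \<gamma> (A \<times> UNIV) \<le> emeasure \<mu> A) \<and>
     (\<forall>B \<in> sets (borel :: 'a measure). emeasure \<gamma> (UNIV \<times> B) \<le> emeasure \<nu> B)"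

definition plan_cost :: "real \<Rightarrow> ('a::metric_space \<times> 'a) measure \<Rightarrow> real" where
  "plan_cost p \<gamma> = (enn2real (\<integral>\<^sup>+ z. ennreal (dist (fst z) (snd z) powr p) \<partial>\<gamma>)) powr (1 / p)"

text \<open>Partial Wasserstein distance W_{p,alpha}; infimum in ennreal (empty infimum = top).\<close>
definition W_partial :: "real \<Rightarrow> real \<Rightarrow> 'a::metric_space measure \<Rightarrow> 'a measure \<Rightarrow> ennreal" where
  "W_partial p \<alpha> \<mu> \<nu> = (INF \<gamma> \<in> {\<gamma>. partial_plan \<alpha> \<mu> \<nu> \<gamma>}. ennreal (plan_cost p \<gamma>))"

definition W_dist :: "real \<Rightarrow> 'a::metric_space measure \<Rightarrow> 'a measure \<Rightarrow> ennreal" where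
  "W_dist p \<mu> \<nu> = W_partial p 1 \<mu> \<nu>"

definition RPW :: "real \<Rightarrow> real \<Rightarrow> 'a::metric_space measure \<Rightarrow> 'a measure \<Rightarrow> real" where
  "RPW p k \<mu> \<nu> = Inf {\<epsilon> \<in> {0..1}. W_partial p (1 - \<epsilon>) \<mu> \<nu> \<le> ennreal (k * \<epsilon>)}"

end

theory Submission
  imports Defs
begin


lemma Pair_borel: "(Pair x :: 'a::topological_space \<Rightarrow> 'a \<times> 'a) \<in> borel_measurable borel"
  by (intro borel_measurable_continuous_onI continuous_intros)

lemma section_sets: "S \<in> sets (borel :: ('a::topological_space \<times> 'a) measure) \<Longrightarrow> Pair x -` S \<in> sets borel"
  using measurable_sets_borel[OF Pair_borel] by blast

lemma section_open_meas:
  fixes m :: "'a::metric_space measure"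
  assumes m: "sets m = sets borel" and S: "open (S :: ('a \<times> 'a) set)"
  shows "(\<lambda>x. emeasure m (Pair x -` S)) \<in> borel_measurable borel"
proof -
  have sp: "space m = UNIV" using sets_eq_imp_space_eq[OF m] by simp
  have "closed {x. emeasure m (Pair x -` S) \<le> t}" for t
    unfolding closed_sequential_limits
  proof (intro allI impI, elim conjE)
    fix xs l assume le: "\<forall>n. xs n \<in> {x. emeasure m (Pair x -` S) \<le> t}" and lim: "xs \<longlonglongrightarrow> l"
    define T where "T N = (\<Inter>n. Pair (xs (n + N)) -` S)" for N
    have Tsets: "range T \<subseteq> sets m"
      unfolding T_def m using section_sets[OF borel_open[OF S]] by (auto intro!: sets.countable_INT')
    have inc: "incseq T"
      unfolding T_def incseq_def
    proof (intro allI impI subsetI)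
      fix N M y assume "N \<le> M" "y \<in> (\<Inter>n. Pair (xs (n + N)) -` S)"
      then show "y \<in> (\<Inter>n. Pair (xs (n + M)) -` S)"
        by (auto dest: spec[of _ "_ + (M - N)"] simp: algebra_simps)
           (metis (no_types, lifting) INT_iff UNIV_I \<open>N \<le> M\<close> add.commute le_add_diff_inverse vimage_eq add.assoc)
    qed
    have sub: "Pair l -` S \<subseteq> (\<Union>N. T N)"
    proof
      fix y assume "y \<in> Pair l -` S"
      then have "(l, y) \<in> S" by simp
      moreover have "(\<lambda>n. (xs n, y)) \<longlonglongrightarrow> (l, y)" using lim by (intro tendsto_intros)
      ultimately have "eventually (\<lambda>n. (xs n, y) \<in> S) sequentially"
        using S topological_tendstoD by blast
      then obtain N where "\<forall>n\<ge>N. (xs n, y) \<in> S" by (auto simp: eventually_sequentially)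
      then have "y \<in> T N" by (auto simp: T_def)
      then show "y \<in> (\<Union>N. T N)" by blast
    qed
    have "emeasure m (Pair l -` S) \<le> emeasure m (\<Union>N. T N)"
      using Tsets by (intro emeasure_mono sub) auto
    also have "\<dots> = (SUP N. emeasure m (T N))"
      using SUP_emeasure_incseq[OF Tsets inc] by simp
    also have "\<dots> \<le> t"
    proof (rule SUP_least)
      fix N
      have "T N \<subseteq> Pair (xs N) -` S" unfolding T_def by (auto dest: spec[of _ 0] simp del: vimage_eq) (metis add_0 vimageI2)
      then have "emeasure m (T N) \<le> emeasure m (Pair (xs N) -` S)"
        using section_sets[OF borel_open[OF S]] m by (intro emeasure_mono) auto
      also have "\<dots> \<le> t" using le by auto
      finally show "emeasure m (T N) \<le> t" .
    qed
    finally show "l \<in> {x. emeasure m (Pair x -` S) \<le> t}" by simp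
  qed
  then show ?thesis
    by (intro borel_measurableI_le) (auto intro: borel_closed)
qed

lemma section_meas:
  fixes m :: "'a::metric_space measure"
  assumes m: "sets m = sets borel" and fin: "finite_measure m"
    and S: "S \<in> sets (borel :: ('a \<times> 'a) measure)"
  shows "(\<lambda>x. emeasure m (Pair x -` S)) \<in> borel_measurable borel"
proof -
  have sp: "space m = UNIV" using sets_eq_imp_space_eq[OF m] by simp
  have S': "S \<in> sigma_sets UNIV {S. open S}" using S by (simp add: sets_borel)
  show ?thesis
  proof (rule sigma_sets_induct_disjoint[OF _ _ S'])
    show "Int_stable {S :: ('a \<times> 'a) set. open S}" by (auto simp: Int_stable_def)
    show "{S :: ('a \<times> 'a) set. open S} \<subseteq> Pow UNIV" by auto
  next
    fix A :: "('a \<times> 'a) set" assume "A \<in> {S. open S}"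
    then show "(\<lambda>x. emeasure m (Pair x -` A)) \<in> borel_measurable borel"
      using section_open_meas[OF m] by auto
  next
    show "(\<lambda>x. emeasure m (Pair x -` {})) \<in> borel_measurable borel" by simp
  next
    fix A :: "('a \<times> 'a) set"
    assume A1: "A \<in> sigma_sets UNIV {S. open S}"
      and A2: "(\<lambda>x. emeasure m (Pair x -` A)) \<in> borel_measurable borel"
    have As: "A \<in> sets borel" using A1 by (simp add: sets_borel)
    have "emeasure m (Pair x -` (UNIV - A)) = emeasure m (space m) - emeasure m (Pair x -` A)" for x
    proof -
      have "Pair x -` (UNIV - A) = space m - Pair x -` A" using sp by auto
      then show ?thesis
        using section_sets[OF As, of x] m finite_measure.emeasure_finite[OF fin]
        by (simp add: emeasure_compl)
    qed
    then show "(\<lambda>x. emeasure m (Pair x -` (UNIV - A))) \<in> borel_measurable borel" using A2 by simp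
  next
    fix A :: "nat \<Rightarrow> ('a \<times> 'a) set"
    assume A1: "disjoint_family A" and A2: "range A \<subseteq> sigma_sets UNIV {S. open S}"
      and A3: "\<And>i. (\<lambda>x. emeasure m (Pair x -` A i)) \<in> borel_measurable borel"
    have As: "\<And>i. A i \<in> sets borel" using A2 by (auto simp: sets_borel)
    have "emeasure m (Pair x -` (\<Union>(range A))) = (\<Sum>i. emeasure m (Pair x -` A i))" for x
    proof -
      have "Pair x -` (\<Union>(range A)) = (\<Union>i. Pair x -` A i)" by auto
      moreover have "disjoint_family (\<lambda>i. Pair x -` A i)"
        using A1 by (auto simp: disjoint_family_on_def)
      ultimately show ?thesis
        using section_sets[OF As, of x] m by (simp add: suminf_emeasure image_subset_iff)
    qed
    then show "(\<lambda>x. emeasure m (Pair x -` (\<Union>(range A)))) \<in> borel_measurable borel" using A3 by simp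
  qed
qed

lemma coupling_sum:
  fixes g0 :: "('a::metric_space \<times> 'a) measure" and m1 m2 :: "'a measure"
  assumes g0: "sets g0 = sets borel" and m1: "sets m1 = sets borel"
    and m2: "sets m2 = sets borel" and fin: "finite_measure m2"
  shows "\<exists>G. sets G = sets borel \<and> (\<forall>S\<in>sets borel. emeasure G S =
            emeasure g0 S + c * (\<integral>\<^sup>+x. emeasure m2 (Pair x -` S) \<partial>m1))"
proof -
  define F where "F S = emeasure g0 S + c * (\<integral>\<^sup>+x. emeasure m2 (Pair x -` S) \<partial>m1)" for S
  define G where "G = measure_of UNIV (sets (borel :: ('a \<times> 'a) measure)) F"
  have sa: "sigma_algebra UNIV (sets (borel :: ('a \<times> 'a) measure))"
    using sets.sigma_algebra_axioms[of "borel :: ('a \<times> 'a) measure"] by simp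
  have meas: "\<And>S. S \<in> sets borel \<Longrightarrow> (\<lambda>x. emeasure m2 (Pair x -` S)) \<in> borel_measurable m1"
    using section_meas[OF m2 fin] measurable_cong_sets[OF m1 refl] by blast
  have pos: "positive (sets borel) F" unfolding positive_def F_def by simp
  have ca: "countably_additive (sets borel) F"
    unfolding countably_additive_def
  proof (intro allI impI)
    fix A :: "nat \<Rightarrow> ('a \<times> 'a) set"
    assume A: "range A \<subseteq> sets borel" "disjoint_family A" "\<Union>(range A) \<in> sets borel"
    have s1: "(\<Sum>i. emeasure g0 (A i)) = emeasure g0 (\<Union>(range A))"
      using A g0 by (intro suminf_emeasure) auto
    have "emeasure m2 (Pair x -` \<Union>(range A)) = (\<Sum>i. emeasure m2 (Pair x -` A i))" for x
    proof -
      have "Pair x -` (\<Union>(range A)) = (\<Union>i. Pair x -` A i)" by auto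
      moreover have "disjoint_family (\<lambda>i. Pair x -` A i)"
        using A(2) by (auto simp: disjoint_family_on_def)
      ultimately show ?thesis
        using A(1) m2 by (subst suminf_emeasure) (auto simp: image_subset_iff intro!: section_sets)
    qed
    then have s2: "(\<integral>\<^sup>+x. emeasure m2 (Pair x -` \<Union>(range A)) \<partial>m1)
        = (\<Sum>i. \<integral>\<^sup>+x. emeasure m2 (Pair x -` A i) \<partial>m1)"
      using A(1) meas by (simp add: nn_integral_suminf image_subset_iff)
    show "(\<Sum>i. F (A i)) = F (\<Union>(range A))"
      unfolding F_def by (simp add: suminf_add[symmetric] s1 s2)
  qed
  have "sets G = sets borel" unfolding G_def
    using sets.space_closed[of "borel :: ('a \<times> 'a) measure"] sigma_algebra.sigma_sets_eq[OF sa] by (simp add: sets_measure_of)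
  moreover have "\<forall>S\<in>sets borel. emeasure G S = F S"
    unfolding G_def using emeasure_measure_of_sigma[OF sa pos ca] by blast
  ultimately show ?thesis unfolding F_def by blast
qed

lemma powr_superadd:
  fixes a b p :: real
  assumes a: "0 \<le> a" and b: "0 \<le> b" and p: "1 \<le> p"
  shows "a powr p + b powr p \<le> (a + b) powr p"
proof (cases "a + b = 0")
  case True then have "a = 0" "b = 0" using a b by auto
  then show ?thesis by simp
next
  case False
  define s where "s = a + b"
  have s: "0 < s" using False a b unfolding s_def by simp
  have as: "0 \<le> a/s" "a/s \<le> 1" "0 \<le> b/s" "b/s \<le> 1" using a b s by (auto simp: s_def field_simps)
  have ha: "(a / s) powr p \<le> a / s"
    using powr_mono'[OF p as(1,2)] as by simp
  have hb: "(b / s) powr p \<le> b / s"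
    using powr_mono'[OF p as(3,4)] as by simp
  have ea: "a powr p = s powr p * (a/s) powr p" using a s by (simp add: powr_divide)
  have eb: "b powr p = s powr p * (b/s) powr p" using b s by (simp add: powr_divide)
  have "a powr p + b powr p \<le> s powr p * (a/s) + s powr p * (b/s)"
    unfolding ea eb using ha hb by (intro add_mono mult_left_mono) auto
  also have "\<dots> = s powr p * ((a + b) / s)" by (simp add: add_divide_distrib ring_distribs)
  also have "(a + b) / s = 1" using s by (simp add: s_def)
  also have "s powr p * 1 = s powr p" by simp
  finally show ?thesis unfolding s_def .
qed

lemma minkowski_scalar:
  fixes a b p :: real
  assumes a: "0 \<le> a" and b: "0 \<le> b" and p: "1 \<le> p"
  shows "(a powr p + b powr p) powr (1/p) \<le> a + b"
proof -
  have "(a powr p + b powr p) powr (1/p) \<le> ((a + b) powr p) powr (1/p)"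
    using powr_superadd[OF a b p] p by (intro powr_mono2) auto
  also have "\<dots> = a + b" using a b p by (simp add: powr_powr)
  finally show ?thesis .
qed

lemma powr_root_sub:
  fixes r e p :: real
  assumes r: "0 \<le> r" and e: "0 \<le> e" and p: "1 \<le> p"
  shows "(r + e) powr (1/p) \<le> r powr (1/p) + e powr (1/p)"
proof -
  have "(r + e) powr (1/p) = ((r powr (1/p)) powr p + (e powr (1/p)) powr p) powr (1/p)"
    using r e p by (simp add: powr_powr)
  also have "\<dots> \<le> r powr (1/p) + e powr (1/p)"
    using p by (intro minkowski_scalar) auto
  finally show ?thesis .
qed

lemma k_identity:
  fixes k p :: real
  assumes k: "0 < k" and p: "1 \<le> p"
  shows "(1/k) powr (1/p) / k = k powr (- (p + 1) / p)"
proof -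
  have "(1/k) powr (1/p) / k = 1 / (k powr (1/p) * k powr 1)" using k by (simp add: powr_divide)
  also have "\<dots> = 1 / k powr (1/p + 1)" by (simp add: powr_add)
  also have "\<dots> = k powr (- (1/p + 1))" by (simp only: powr_minus_divide)
  also have "- (1/p + 1) = - (p + 1) / p" using p by (simp add: field_simps)
  finally show ?thesis .
qed

lemma fst_borel: "(fst :: 'a::topological_space \<times> 'a \<Rightarrow> 'a) \<in> borel_measurable borel"
  by (intro borel_measurable_continuous_onI continuous_intros)
lemma snd_borel: "(snd :: 'a::topological_space \<times> 'a \<Rightarrow> 'a) \<in> borel_measurable borel"
  by (intro borel_measurable_continuous_onI continuous_intros)

lemma times_UNIV_sets: "A \<in> sets (borel :: 'a::topological_space measure) \<Longrightarrow> A \<times> (UNIV::'a set) \<in> sets borel"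
proof -
  assume "A \<in> sets borel"
  then have "fst -` A \<in> sets (borel :: ('a \<times> 'a) measure)" using measurable_sets_borel[OF fst_borel] by blast
  moreover have "fst -` A = A \<times> (UNIV :: 'a set)" by auto
  ultimately show ?thesis by simp
qed

lemma UNIV_times_sets: "B \<in> sets (borel :: 'a::topological_space measure) \<Longrightarrow> (UNIV::'a set) \<times> B \<in> sets borel"
proof -
  assume "B \<in> sets borel"
  then have "snd -` B \<in> sets (borel :: ('a \<times> 'a) measure)" using measurable_sets_borel[OF snd_borel] by blast
  moreover have "snd -` B = (UNIV :: 'a set) \<times> B" by auto
  ultimately show ?thesis by simp
qed

lemma cost_fun_borel:
  assumes "p \<ge> 1"
  shows "(\<lambda>z. ennreal (dist (fst z) (snd z :: 'a::metric_space) powr p)) \<in> borel_measurable borel"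
proof -
  have "continuous_on UNIV (\<lambda>z::'a\<times>'a. dist (fst z) (snd z))" by (intro continuous_intros)
  then have "(\<lambda>z::'a\<times>'a. dist (fst z) (snd z)) \<in> borel_measurable borel" by (rule borel_measurable_continuous_onI)
  then show ?thesis by measurable
qed

lemma cost_fun_meas:
  assumes "p \<ge> 1" "sets g = sets (borel :: ('a::metric_space \<times> 'a) measure)"
  shows "(\<lambda>z. ennreal (dist (fst z) (snd z :: 'a) powr p)) \<in> borel_measurable g"
  using cost_fun_borel[OF assms(1)] measurable_cong_sets[OF assms(2) refl] by blast

lemma cost_le_mass:
  fixes g :: "('a::metric_space \<times> 'a) measure"
  assumes diam: "\<forall>x y::'a. dist x y \<le> 1" and p: "p \<ge> 1" and g: "sets g = sets borel"
  shows "(\<integral>\<^sup>+z. ennreal (dist (fst z) (snd z) powr p) \<partial>g) \<le> emeasure g (space g)"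
proof -
  have "(\<integral>\<^sup>+z. ennreal (dist (fst z) (snd z) powr p) \<partial>g) \<le> (\<integral>\<^sup>+z. 1 \<partial>g)"
  proof (intro nn_integral_mono)
    fix z :: "'a \<times> 'a"
    have "dist (fst z) (snd z) powr p \<le> 1"
      using diam[rule_format, of "fst z" "snd z"] p zero_le_dist[of "fst z" "snd z"]
      by (smt (verit) powr_le_one_le powr_nonneg_iff)
    then show "ennreal (dist (fst z) (snd z) powr p) \<le> 1" by simp
  qed
  then show ?thesis by simp
qed

lemma scale_plan:
  fixes g :: "('a::metric_space \<times> 'a) measure"
  assumes pl: "partial_plan a \<mu> \<nu> g" and a: "0 \<le> a" and b: "0 \<le> b" "b \<le> 1" and p: "p \<ge> 1"
  shows "partial_plan (b * a) \<mu> \<nu> (scale_measure (ennreal b) g)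
         \<and> plan_cost p (scale_measure (ennreal b) g) \<le> plan_cost p g"
proof
  have gs: "sets g = sets borel" and gm: "emeasure g (space g) = ennreal a"
    and m1: "\<forall>A\<in>sets borel. emeasure g (A \<times> UNIV) \<le> emeasure \<mu> A"
    and m2: "\<forall>B\<in>sets borel. emeasure g (UNIV \<times> B) \<le> emeasure \<nu> B"
    using pl unfolding partial_plan_def by auto
  have le: "ennreal b * x \<le> x" for x :: ennreal
    using mult_right_mono[of "ennreal b" 1 x] b by simp
  show "partial_plan (b * a) \<mu> \<nu> (scale_measure (ennreal b) g)"
    unfolding partial_plan_def
    using gs gm m1 m2 a b le order_trans[OF le]
    by (auto simp: space_scale_measure ennreal_mult)
  have "plan_cost p (scale_measure (ennreal b) g)
      = (b * enn2real (\<integral>\<^sup>+z. ennreal (dist (fst z) (snd z) powr p) \<partial>g)) powr (1/p)"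
    unfolding plan_cost_def using cost_fun_meas[OF p gs] b
    by (simp add: nn_integral_scale_measure enn2real_mult)
  also have "\<dots> \<le> (enn2real (\<integral>\<^sup>+z. ennreal (dist (fst z) (snd z) powr p) \<partial>g)) powr (1/p)"
    using b p by (intro powr_mono2) (auto simp: mult_left_le_one_le)
  finally show "plan_cost p (scale_measure (ennreal b) g) \<le> plan_cost p g"
    unfolding plan_cost_def .
qed

lemma plan_exists:
  fixes \<mu> \<nu> :: "'a::metric_space measure"
  assumes mu: "prob_space \<mu>" "sets \<mu> = sets (borel :: 'a measure)"
    and nu: "prob_space \<nu>" "sets \<nu> = sets (borel :: 'a measure)"
  shows "\<exists>G. partial_plan 1 \<mu> \<nu> G"
proof -
  have spm: "space \<mu> = UNIV" using sets_eq_imp_space_eq[OF mu(2)] by simp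
  have spn: "space \<nu> = UNIV" using sets_eq_imp_space_eq[OF nu(2)] by simp
  have n1: "emeasure \<nu> UNIV = 1" using prob_space.emeasure_space_1[OF nu(1)] spn by simp
  have m1: "emeasure \<mu> UNIV = 1" using prob_space.emeasure_space_1[OF mu(1)] spm by simp
  have finn: "finite_measure \<nu>" using nu(1) by (simp add: prob_space_def)
  obtain G where Gs: "sets G = sets (borel :: ('a \<times> 'a) measure)"
    and Ge: "\<forall>S\<in>sets borel. emeasure G S = emeasure (null_measure (borel :: ('a \<times> 'a) measure)) S
        + 1 * (\<integral>\<^sup>+x. emeasure \<nu> (Pair x -` S) \<partial>\<mu>)"
    using coupling_sum[of "null_measure borel" \<mu> \<nu> 1] mu nu finn by auto
  have spG: "space G = UNIV" using sets_eq_imp_space_eq[OF Gs] by simp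
  have marg1: "emeasure G (A \<times> UNIV) = emeasure \<mu> A" if A: "A \<in> sets borel" for A
  proof -
    have "emeasure G (A \<times> UNIV) = (\<integral>\<^sup>+x. emeasure \<nu> (Pair x -` (A \<times> UNIV)) \<partial>\<mu>)"
      using Ge times_UNIV_sets[OF A] by simp
    also have "\<dots> = (\<integral>\<^sup>+x. indicator A x \<partial>\<mu>)"
      by (intro nn_integral_cong) (auto simp: n1 indicator_def)
    also have "\<dots> = emeasure \<mu> A" using A mu(2) by simp
    finally show ?thesis .
  qed
  have marg2: "emeasure G (UNIV \<times> B) = emeasure \<nu> B" if B: "B \<in> sets borel" for B
  proof -
    have "emeasure G (UNIV \<times> B) = (\<integral>\<^sup>+x. emeasure \<nu> (Pair x -` (UNIV \<times> B)) \<partial>\<mu>)"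
      using Ge UNIV_times_sets[OF B] by simp
    also have "\<dots> = (\<integral>\<^sup>+x. emeasure \<nu> B \<partial>\<mu>)"
      by (intro nn_integral_cong) auto
    also have "\<dots> = emeasure \<nu> B" using spm m1 by simp
    finally show ?thesis .
  qed
  have "emeasure G (space G) = 1" using marg1[of UNIV] m1 spG by simp
  then show ?thesis unfolding partial_plan_def using Gs marg1 marg2 by (auto intro!: exI[of _ G])
qed

lemma plan_cost_le1:
  fixes g :: "('a::metric_space \<times> 'a) measure"
  assumes diam: "\<forall>x y::'a. dist x y \<le> 1" and p: "p \<ge> 1" and pl: "partial_plan a \<mu> \<nu> g" and a: "a \<le> 1"
  shows "plan_cost p g \<le> 1"
proof -
  have gs: "sets g = sets borel" and gm: "emeasure g (space g) = ennreal a"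
    using pl unfolding partial_plan_def by auto
  have "(\<integral>\<^sup>+z. ennreal (dist (fst z) (snd z) powr p) \<partial>g) \<le> 1"
    using cost_le_mass[OF diam p gs] gm a by (metis ennreal_le_1 order_trans)
  then have "enn2real (\<integral>\<^sup>+z. ennreal (dist (fst z) (snd z) powr p) \<partial>g) \<le> 1"
    using enn2real_mono[of _ 1] by (metis enn2real_1 ennreal_one_less_top)
  then have "enn2real (\<integral>\<^sup>+z. ennreal (dist (fst z) (snd z) powr p) \<partial>g) powr (1/p) \<le> 1 powr (1/p)"
    using p by (intro powr_mono2) auto
  then show ?thesis unfolding plan_cost_def by simp
qed

lemma W_partial_le1:
  fixes \<mu> \<nu> :: "'a::metric_space measure"
  assumes diam: "\<forall>x y::'a. dist x y \<le> 1"
    and mu: "prob_space \<mu>" "sets \<mu> = sets (borel :: 'a measure)"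
    and nu: "prob_space \<nu>" "sets \<nu> = sets (borel :: 'a measure)"
    and p: "p \<ge> 1" and a: "0 \<le> a" "a \<le> 1"
  shows "W_partial p a \<mu> \<nu> \<le> 1"
proof -
  obtain G where G: "partial_plan 1 \<mu> \<nu> G" using plan_exists[OF mu nu] by blast
  have "partial_plan (a * 1) \<mu> \<nu> (scale_measure (ennreal a) G)"
    using scale_plan[OF G _ a p] by simp
  then have "W_partial p a \<mu> \<nu> \<le> ennreal (plan_cost p (scale_measure (ennreal a) G))"
    unfolding W_partial_def by (auto intro: INF_lower)
  also have "\<dots> \<le> 1"
    using plan_cost_le1[OF diam p \<open>partial_plan (a * 1) \<mu> \<nu> _\<close>] a by simp
  finally show ?thesis .
qed

lemma W_partial_0:
  fixes \<mu> \<nu> :: "'a::metric_space measure"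
  assumes mu: "prob_space \<mu>" "sets \<mu> = sets (borel :: 'a measure)"
    and nu: "prob_space \<nu>" "sets \<nu> = sets (borel :: 'a measure)"
    and p: "p \<ge> 1"
  shows "W_partial p 0 \<mu> \<nu> = 0"
proof -
  obtain G where G: "partial_plan 1 \<mu> \<nu> G" using plan_exists[OF mu nu] by blast
  have pl: "partial_plan 0 \<mu> \<nu> (null_measure G)"
    using scale_plan[of 1 \<mu> \<nu> G 0 p] G p by simp
  have gs: "sets G = sets borel" using G unfolding partial_plan_def by auto
  have "plan_cost p (null_measure G) = 0"
    unfolding plan_cost_def by (simp add: nn_integral_null_measure)
  then have "W_partial p 0 \<mu> \<nu> \<le> 0"
    using pl unfolding W_partial_def by (metis (mono_tags, lifting) INF_lower mem_Collect_eq ennreal_0)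
  then show ?thesis by simp
qed

lemma W_partial_le_W:
  fixes \<mu> \<nu> :: "'a::metric_space measure"
  assumes p: "p \<ge> 1" and a: "0 \<le> a" "a \<le> 1"
  shows "W_partial p a \<mu> \<nu> \<le> W_dist p \<mu> \<nu>"
  unfolding W_dist_def W_partial_def
proof (rule INF_greatest)
  fix G assume "G \<in> {\<gamma>. partial_plan 1 \<mu> \<nu> \<gamma>}"
  then have G: "partial_plan 1 \<mu> \<nu> G" by simp
  have "partial_plan (a * 1) \<mu> \<nu> (scale_measure (ennreal a) G)
      \<and> plan_cost p (scale_measure (ennreal a) G) \<le> plan_cost p G"
    using scale_plan[OF G _ a p] by simp
  then show "(INF \<gamma> \<in> {\<gamma>. partial_plan a \<mu> \<nu> \<gamma>}. ennreal (plan_cost p \<gamma>)) \<le> ennreal (plan_cost p G)"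
    by (metis (mono_tags, lifting) INF_lower2 ennreal_leI mem_Collect_eq mult.right_neutral)
qed

lemma complete_plan:
  fixes \<mu> \<nu> :: "'a::metric_space measure" and g :: "('a \<times> 'a) measure"
  assumes diam: "\<forall>x y::'a. dist x y \<le> 1"
    and mu: "prob_space \<mu>" "sets \<mu> = sets (borel :: 'a measure)"
    and nu: "prob_space \<nu>" "sets \<nu> = sets (borel :: 'a measure)"
    and p: "p \<ge> 1" and pl: "partial_plan (1 - e) \<mu> \<nu> g" and e: "0 \<le> e" "e \<le> 1"
  shows "\<exists>G. partial_plan 1 \<mu> \<nu> G \<and>
     (\<integral>\<^sup>+z. ennreal (dist (fst z) (snd z) powr p) \<partial>G)
       \<le> (\<integral>\<^sup>+z. ennreal (dist (fst z) (snd z) powr p) \<partial>g) + ennreal e"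
proof -
  have gs: "sets g = sets borel" and gm: "emeasure g (space g) = ennreal (1 - e)"
    and gm1: "\<forall>A\<in>sets borel. emeasure g (A \<times> UNIV) \<le> emeasure \<mu> A"
    and gm2: "\<forall>B\<in>sets borel. emeasure g (UNIV \<times> B) \<le> emeasure \<nu> B"
    using pl unfolding partial_plan_def by auto
  have spg: "space g = UNIV" using sets_eq_imp_space_eq[OF gs] by simp
  have spm: "space \<mu> = UNIV" using sets_eq_imp_space_eq[OF mu(2)] by simp
  have spn: "space \<nu> = UNIV" using sets_eq_imp_space_eq[OF nu(2)] by simp
  have n1: "emeasure \<nu> UNIV = 1" using prob_space.emeasure_space_1[OF nu(1)] spn by simp
  have m1: "emeasure \<mu> UNIV = 1" using prob_space.emeasure_space_1[OF mu(1)] spm by simp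
  have finm: "finite_measure \<mu>" using mu(1) by (simp add: prob_space_def)
  have finn: "finite_measure \<nu>" using nu(1) by (simp add: prob_space_def)
  have fstm: "fst \<in> measurable g borel" using fst_borel measurable_cong_sets[OF gs refl] by blast
  have sndm: "snd \<in> measurable g borel" using snd_borel measurable_cong_sets[OF gs refl] by blast
  define g1 where "g1 = distr g (borel :: 'a measure) fst"
  define g2 where "g2 = distr g (borel :: 'a measure) snd"
  have g1e: "emeasure g1 A = emeasure g (A \<times> UNIV)" if "A \<in> sets borel" for A
  proof -
    have "fst -` A \<inter> space g = A \<times> UNIV" using spg by auto
    then show ?thesis unfolding g1_def using emeasure_distr[OF fstm that] by simp
  qed
  have g2e: "emeasure g2 B = emeasure g (UNIV \<times> B)" if "B \<in> sets borel" for B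
  proof -
    have "snd -` B \<inter> space g = UNIV \<times> B" using spg by auto
    then show ?thesis unfolding g2_def using emeasure_distr[OF sndm that] by simp
  qed
  have g1s: "sets g1 = sets borel" "space g1 = UNIV" unfolding g1_def by auto
  have g2s: "sets g2 = sets borel" "space g2 = UNIV" unfolding g2_def by auto
  have fing1: "finite_measure g1"
    by (rule finite_measureI) (simp add: g1s g1e spg[symmetric] gm)
  have fing2: "finite_measure g2"
    by (rule finite_measureI) (simp add: g2s g2e spg[symmetric] gm)
  define m' where "m' = diff_measure \<mu> g1"
  define n' where "n' = diff_measure \<nu> g2"
  have m'e: "emeasure m' A = emeasure \<mu> A - emeasure g (A \<times> UNIV)" if A: "A \<in> sets borel" for A
    unfolding m'_def using A mu(2) g1s gm1 g1e
    by (subst emeasure_diff_measure[OF finm fing1]) auto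
  have n'e: "emeasure n' B = emeasure \<nu> B - emeasure g (UNIV \<times> B)" if B: "B \<in> sets borel" for B
    unfolding n'_def using B nu(2) g2s gm2 g2e
    by (subst emeasure_diff_measure[OF finn fing2]) auto
  have m's: "sets m' = sets borel" "space m' = UNIV" unfolding m'_def using mu(2) spm by auto
  have n's: "sets n' = sets borel" "space n' = UNIV" unfolding n'_def using nu(2) spn by auto
  have gU: "emeasure g (UNIV \<times> UNIV) = ennreal (1 - e)" using gm spg by simp
  have ee: "1 - (1 - ennreal e) = ennreal e" using e by (smt (verit, best) ennreal_1 ennreal_minus)
  have m'U: "emeasure m' UNIV = ennreal e"
    using m'e[of UNIV] m1 gU e ee by (simp add: ennreal_minus[symmetric])
  have n'U: "emeasure n' UNIV = ennreal e"
    using n'e[of UNIV] n1 gU e ee by (simp add: ennreal_minus[symmetric])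
  have finn': "finite_measure n'"
    by (rule finite_measureI) (simp add: n's n'U)
  define c where "c = ennreal (1 / e)"
  have ce: "c * ennreal e \<le> 1"
    unfolding c_def using e by (simp add: ennreal_mult[symmetric])
  obtain G where Gs: "sets G = sets (borel :: ('a \<times> 'a) measure)"
    and Ge: "\<forall>S\<in>sets borel. emeasure G S = emeasure g S
        + c * (\<integral>\<^sup>+x. emeasure n' (Pair x -` S) \<partial>m')"
    using coupling_sum[OF gs m's(1) n's(1) finn', of c] by blast
  have spG: "space G = UNIV" using sets_eq_imp_space_eq[OF Gs] by simp
  have marg1: "emeasure G (A \<times> UNIV) \<le> emeasure \<mu> A" if A: "A \<in> sets borel" for A
  proof -
    have "(\<integral>\<^sup>+x. emeasure n' (Pair x -` (A \<times> UNIV)) \<partial>m') = (\<integral>\<^sup>+x. ennreal e * indicator A x \<partial>m')"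
      by (intro nn_integral_cong) (auto simp: n'U indicator_def)
    also have "\<dots> = ennreal e * emeasure m' A" using A m's by (simp add: nn_integral_cmult_indicator del: nn_integral_indicator_finite nn_integral_const)
    finally have "emeasure G (A \<times> UNIV) = emeasure g (A \<times> UNIV) + c * ennreal e * emeasure m' A"
      using Ge times_UNIV_sets[OF A] by (simp add: mult.assoc)
    also have "\<dots> \<le> emeasure g (A \<times> UNIV) + emeasure m' A"
      using mult_right_mono[OF ce, of "emeasure m' A"] by (intro add_left_mono) simp
    also have "\<dots> = emeasure \<mu> A" using m'e[OF A] gm1 A by simp
    finally show ?thesis by simp
  qed
  have marg2: "emeasure G (UNIV \<times> B) \<le> emeasure \<nu> B" if B: "B \<in> sets borel" for B
  proof -
    have "(\<integral>\<^sup>+x. emeasure n' (Pair x -` (UNIV \<times> B)) \<partial>m') = (\<integral>\<^sup>+x. emeasure n' B \<partial>m')"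
      by (intro nn_integral_cong) auto
    also have "\<dots> = emeasure n' B * ennreal e" using m's m'U by simp
    finally have "emeasure G (UNIV \<times> B) = emeasure g (UNIV \<times> B) + c * ennreal e * emeasure n' B"
      using Ge UNIV_times_sets[OF B] by (simp add: mult.assoc mult.commute mult.left_commute)
    also have "\<dots> \<le> emeasure g (UNIV \<times> B) + emeasure n' B"
      using mult_right_mono[OF ce, of "emeasure n' B"] by (intro add_left_mono) simp
    also have "\<dots> = emeasure \<nu> B" using n'e[OF B] gm2 B by simp
    finally show ?thesis by simp
  qed
  have tot: "emeasure G UNIV = 1"
  proof -
    have "(\<integral>\<^sup>+x. emeasure n' (Pair x -` (UNIV \<times> UNIV)) \<partial>m') = (\<integral>\<^sup>+x. ennreal e \<partial>m')"
      by (intro nn_integral_cong) (auto simp: n'U)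
    also have "\<dots> = ennreal e * ennreal e" using m's m'U by simp
    finally have "emeasure G (UNIV \<times> UNIV) = ennreal (1 - e) + c * (ennreal e * ennreal e)"
      using Ge gU by simp
    also have "\<dots> = 1"
    proof (cases "e = 0")
      case True then show ?thesis by simp
    next
      case False
      then have "c * (ennreal e * ennreal e) = ennreal e"
        unfolding c_def using e by (simp add: ennreal_mult[symmetric])
      then show ?thesis using e by (simp add: ennreal_plus[symmetric] del: ennreal_plus)
    qed
    finally show ?thesis by simp
  qed
  have plG: "partial_plan 1 \<mu> \<nu> G"
    unfolding partial_plan_def using Gs marg1 marg2 tot spG by auto
  have gleG: "g \<le> G"
  proof -
    have "emeasure g S \<le> emeasure G S" for S
    proof (cases "S \<in> sets borel")
      case True then show ?thesis using Ge by simp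
    next
      case False then show ?thesis using gs by (simp add: emeasure_notin_sets)
    qed
    then show ?thesis using gs Gs spg spG by (simp add: le_measure_iff le_fun_def)
  qed
  define f where "f z = ennreal (dist (fst z) (snd z :: 'a) powr p)" for z
  define h where "h z = ennreal (1 - dist (fst z) (snd z :: 'a) powr p)" for z
  have fh: "f z + h z = 1" for z
  proof -
    have "0 \<le> dist (fst z) (snd z) powr p" by simp
    moreover have "dist (fst z) (snd z) powr p \<le> 1"
      using diam[rule_format, of "fst z" "snd z"] p zero_le_dist[of "fst z" "snd z"]
      by (smt (verit) powr_le_one_le powr_nonneg_iff)
    ultimately show ?thesis unfolding f_def h_def by (simp add: ennreal_plus[symmetric] del: ennreal_plus)
  qed
  have fb: "f \<in> borel_measurable borel" unfolding f_def using cost_fun_borel[OF p] by simp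
  have hb: "h \<in> borel_measurable borel"
  proof -
    have "continuous_on UNIV (\<lambda>z::'a\<times>'a. dist (fst z) (snd z))" by (intro continuous_intros)
    then have "(\<lambda>z::'a\<times>'a. dist (fst z) (snd z)) \<in> borel_measurable borel" by (rule borel_measurable_continuous_onI)
    then show ?thesis unfolding h_def by measurable
  qed
  have fG: "f \<in> borel_measurable G" "h \<in> borel_measurable G"
    using fb hb measurable_cong_sets[OF Gs refl] by blast+
  have fg: "f \<in> borel_measurable g" "h \<in> borel_measurable g"
    using fb hb measurable_cong_sets[OF gs refl] by blast+
  have sG: "integral\<^sup>N G f + integral\<^sup>N G h = 1"
    using nn_integral_add[OF fG, symmetric] fh spG tot by simp
  have sg: "integral\<^sup>N g f + integral\<^sup>N g h = ennreal (1 - e)"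
    using nn_integral_add[OF fg, symmetric] fh spg gU by simp
  have hle: "integral\<^sup>N g h \<le> integral\<^sup>N G h"
    using nn_integral_mono_measure[OF _ gleG] gs Gs by simp
  have "integral\<^sup>N g h \<le> ennreal (1 - e)" unfolding sg[symmetric]
    by (rule add_increasing) simp_all
  then have hfin: "integral\<^sup>N g h \<noteq> top"
    using neq_top_trans[OF ennreal_neq_top] by blast
  have "integral\<^sup>N G f + integral\<^sup>N g h \<le> integral\<^sup>N G f + integral\<^sup>N G h"
    using hle by (rule add_left_mono)
  also have "\<dots> = ennreal e + ennreal (1 - e)" using sG e by (simp add: ennreal_plus[symmetric] del: ennreal_plus)
  also have "\<dots> = (ennreal e + integral\<^sup>N g f) + integral\<^sup>N g h" using sg by (simp add: add.assoc)
  finally have "integral\<^sup>N G f \<le> ennreal e + integral\<^sup>N g f" using hfin by simp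
  then show ?thesis using plG unfolding f_def by (auto simp: add.commute)
qed

lemma key_bound:
  fixes \<mu> \<nu> :: "'a::metric_space measure" and p k :: real
  assumes diam: "\<forall>x y::'a. dist x y \<le> 1"
    and mu: "prob_space \<mu>" "sets \<mu> = sets (borel :: 'a measure)"
    and nu: "prob_space \<nu>" "sets \<nu> = sets (borel :: 'a measure)"
    and p: "p \<ge> 1" and k: "k > 0"
    and e: "0 \<le> e" "e \<le> 1" and We: "W_partial p (1 - e) \<mu> \<nu> \<le> ennreal (k * e)"
    and d: "0 < d"
  shows "W_dist p \<mu> \<nu> \<le> ennreal (k * e + d + e powr (1/p))"
proof -
  have "W_partial p (1 - e) \<mu> \<nu> < ennreal (k * e + d)"
  proof (rule order.strict_trans1[OF We])
    show "ennreal (k * e) < ennreal (k * e + d)" using k e d by (intro ennreal_lessI) (auto simp: add_nonneg_pos)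
  qed
  then obtain g where pl: "partial_plan (1 - e) \<mu> \<nu> g" and cg: "ennreal (plan_cost p g) < ennreal (k * e + d)"
    unfolding W_partial_def INF_less_iff by auto
  have cg': "plan_cost p g < k * e + d"
    using cg by (simp add: plan_cost_def ennreal_less_iff)
  obtain G where plG: "partial_plan 1 \<mu> \<nu> G" and IG:
    "(\<integral>\<^sup>+z. ennreal (dist (fst z) (snd z) powr p) \<partial>G)
       \<le> (\<integral>\<^sup>+z. ennreal (dist (fst z) (snd z) powr p) \<partial>g) + ennreal e"
    using complete_plan[OF diam mu nu p pl e] by blast
  have gs: "sets g = sets borel" and gm: "emeasure g (space g) = ennreal (1 - e)"
    using pl unfolding partial_plan_def by auto
  define Ig where "Ig = (\<integral>\<^sup>+z. ennreal (dist (fst z) (snd z) powr p) \<partial>g)"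
  have Igfin: "Ig \<le> ennreal (1 - e)" unfolding Ig_def using cost_le_mass[OF diam p gs] gm by simp
  then have Igtop: "Ig \<noteq> top" using neq_top_trans[OF ennreal_neq_top] by blast
  have "enn2real (\<integral>\<^sup>+z. ennreal (dist (fst z) (snd z) powr p) \<partial>G) \<le> enn2real (Ig + ennreal e)"
    using IG Igtop unfolding Ig_def[symmetric] by (intro enn2real_mono) (auto simp: top_unique less_top)
  also have "\<dots> = enn2real Ig + e"
  proof -
    obtain x where x: "Ig = ennreal x" "0 \<le> x" using Igtop by (cases Ig rule: ennreal_cases) auto
    then show ?thesis using e by (simp add: ennreal_plus[symmetric] del: ennreal_plus)
  qed
  finally have IGle: "enn2real (\<integral>\<^sup>+z. ennreal (dist (fst z) (snd z) powr p) \<partial>G) \<le> enn2real Ig + e" .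
  have cgpow: "enn2real Ig = (plan_cost p g) powr p"
    unfolding plan_cost_def Ig_def[symmetric] using p by (simp add: powr_powr)
  have "plan_cost p G \<le> (enn2real Ig + e) powr (1/p)"
    unfolding plan_cost_def using IGle p by (intro powr_mono2) auto
  also have "\<dots> = ((plan_cost p g) powr p + (e powr (1/p)) powr p) powr (1/p)"
    using cgpow e p by (simp add: powr_powr)
  also have "\<dots> \<le> plan_cost p g + e powr (1/p)"
    using p by (intro minkowski_scalar) (auto simp: plan_cost_def)
  also have "\<dots> \<le> k * e + d + e powr (1/p)" using cg' by simp
  finally have "plan_cost p G \<le> k * e + d + e powr (1/p)" .
  moreover have "W_dist p \<mu> \<nu> \<le> ennreal (plan_cost p G)"
    unfolding W_dist_def W_partial_def using plG by (auto intro: INF_lower)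
  ultimately show ?thesis using ennreal_leI order_trans by blast
qed

theorem lemma4p3:
  fixes \<mu> \<nu> :: "'a::metric_space measure" and p k :: real
  assumes diam: "\<forall>x y::'a. dist x y \<le> 1"
    and mu: "prob_space \<mu>" "sets \<mu> = sets (borel :: 'a measure)"
    and nu: "prob_space \<nu>" "sets \<nu> = sets (borel :: 'a measure)"
    and p: "p \<ge> 1" and k: "k > 0"
  shows "ennreal (RPW p k \<mu> \<nu>) \<le> W_dist p \<mu> \<nu> / ennreal k
       \<and> W_dist p \<mu> \<nu> / ennreal k \<le> ennreal (RPW p k \<mu> \<nu> + k powr (- (p + 1) / p))"
proof -
  define S where "S = {\<epsilon> \<in> {0..1}. W_partial p (1 - \<epsilon>) \<mu> \<nu> \<le> ennreal (k * \<epsilon>)}"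
  define r where "r = RPW p k \<mu> \<nu>"
  have r_def': "r = Inf S" unfolding r_def S_def RPW_def by simp
  have one: "1 \<in> S" unfolding S_def using W_partial_0[OF mu nu p] by simp
  have bdd: "bdd_below S" unfolding S_def by (rule bdd_belowI[of _ 0]) auto
  have r0: "0 \<le> r" unfolding r_def' using one by (intro cInf_greatest) (auto simp: S_def)
  have r1: "r \<le> 1" unfolding r_def' using one bdd by (rule cInf_lower)
  have rk: "r \<le> 1 / k"
  proof (cases "k \<ge> 1")
    case True
    have "1 / k \<in> S"
      unfolding S_def using True k W_partial_le1[OF diam mu nu p, of "1 - 1/k"]
      by (auto simp: field_simps)
    then show ?thesis unfolding r_def' using bdd by (rule cInf_lower)
  next
    case False
    then have "1 \<le> 1 / k" using k by (simp add: field_simps)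
    then show ?thesis using r1 by linarith
  qed
  define W where "W = W_dist p \<mu> \<nu>"
  have W1: "W \<le> 1" unfolding W_def W_dist_def using W_partial_le1[OF diam mu nu p, of 1] by simp
  then have Wtop: "W \<noteq> top" using neq_top_trans[OF ennreal_neq_top[of 1]] by simp
  define w where "w = enn2real W"
  have Ww: "W = ennreal w" and w0: "0 \<le> w" unfolding w_def using Wtop by (auto simp: ennreal_enn2real_if)
  have Wk: "W / ennreal k = ennreal (w / k)" unfolding Ww using w0 k by (simp add: divide_ennreal)
  have part1: "r \<le> w / k"
  proof (cases "w / k \<ge> 1")
    case True then show ?thesis using r1 by linarith
  next
    case False
    have "W_partial p (1 - w / k) \<mu> \<nu> \<le> W"
      unfolding W_def using False w0 k by (intro W_partial_le_W[OF p]) auto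
    also have "W = ennreal (k * (w / k))" using Ww k by simp
    finally have "w / k \<in> S" unfolding S_def using False w0 k by auto
    then show ?thesis unfolding r_def' using bdd by (rule cInf_lower)
  qed
  have key: "w \<le> k * r + r powr (1/p)"
  proof (rule field_le_epsilon)
    fix z :: real assume z: "0 < z"
    define \<eta> where "\<eta> = min (z / (3 * k)) ((z / 3) powr p)"
    have \<eta>0: "0 < \<eta>" unfolding \<eta>_def using z k by simp
    have "Inf S < r + \<eta>" using \<eta>0 r_def' by simp
    then obtain e where eS: "e \<in> S" and er: "e < r + \<eta>"
      using cInf_lessD[of S "r + \<eta>"] one by blast
    have re: "r \<le> e" unfolding r_def' using eS bdd by (rule cInf_lower)
    have e01: "0 \<le> e" "e \<le> 1" and We: "W_partial p (1 - e) \<mu> \<nu> \<le> ennreal (k * e)"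
      using eS unfolding S_def by auto
    have "W \<le> ennreal (k * e + z / 3 + e powr (1/p))"
      unfolding W_def using z by (intro key_bound[OF diam mu nu p k e01 We]) auto
    then have wle: "w \<le> k * e + z / 3 + e powr (1/p)"
      unfolding Ww using w0 e01 z k by (subst (asm) ennreal_le_iff) (auto intro!: add_nonneg_nonneg)
    have "e powr (1/p) \<le> (r + \<eta>) powr (1/p)" using er e01 p by (intro powr_mono2) auto
    also have "\<dots> \<le> r powr (1/p) + \<eta> powr (1/p)" using r0 \<eta>0 p by (intro powr_root_sub) auto
    also have "\<eta> powr (1/p) \<le> ((z / 3) powr p) powr (1/p)"
      using \<eta>0 p unfolding \<eta>_def by (intro powr_mono2) auto
    also have "((z / 3) powr p) powr (1/p) = z / 3" using z p by (simp add: powr_powr)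
    finally have t1: "e powr (1/p) \<le> r powr (1/p) + z / 3" by simp
    have "k * e \<le> k * (r + \<eta>)" using er k by simp
    also have "\<dots> = k * r + k * \<eta>" by (simp add: algebra_simps)
    also have "k * \<eta> \<le> k * (z / (3 * k))" using k unfolding \<eta>_def by (intro mult_left_mono) auto
    also have "k * (z / (3 * k)) = z / 3" using k by simp
    finally have t2: "k * e \<le> k * r + z / 3" by simp
    show "w \<le> k * r + r powr (1/p) + z" using wle t1 t2 by linarith
  qed
  have part2: "w / k \<le> r + k powr (- (p + 1) / p)"
  proof -
    have "w / k \<le> (k * r + r powr (1/p)) / k" using key k by (simp add: divide_right_mono)
    also have "\<dots> = r + r powr (1/p) / k" using k by (simp add: field_simps)
    also have "r powr (1/p) / k \<le> (1/k) powr (1/p) / k"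
      using rk r0 p k by (intro divide_right_mono powr_mono2) auto
    also have "(1/k) powr (1/p) / k = k powr (- (p + 1) / p)" using k p by (rule k_identity)
    finally show ?thesis by simp
  qed
  show ?thesis
    unfolding r_def[symmetric] W_def[symmetric] Wk
    using part1 part2 by (auto intro!: ennreal_leI)
qed

end
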